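(* Let $Y$ be a real normed space. (i) Let $A\neq Y$ be a nonempty closed convex cone of $Y$ (equivalently $A^*\neq\{0\}$) and $e\in Y$. Then $e\in\operatorname{int}(A)$ if and only if $\inf\{y^*(e):y^*\in S_{Y^*}\cap A^*\}>0$. Consequently, $\operatorname{int}(A)\neq\emptyset$ if and only if either $A=Y$ (equivalently $A^*=\{0\}$) or $0\notin\overline{\operatorname{conv}}^{w^*}(S_{Y^*}\cap A^* )$. (ii) Let $K$ be a nonempty closed convex subset of $Y$. Then $\operatorname{int}(\mathcal{R}_K)\neq\emptyset$ if and only if either $K=Y$ or $0\notin\overline{\operatorname{conv}}^{w^*}(S_{Y^*}\cap(-\operatorname{bar}(K)))$.
   Context: $Y^*$ is the dual of $Y$, $S_{Y^*}$ its unit sphere, $\overline{\operatorname{conv}}^{w^*}$ the weak-star closed convex hull. $A^*:=\{y^*\in Y^*:y^*(y)\ge0\ \forall y\in A\}$. $\operatorname{bar}(K):=\{y^*\in Y^*:\sup_{y\in K}y^*(y)<+\infty\}$; $\mathcal{R}_K:=\{v\in Y:x+\lambda v\in K\ \forall\lambda>0,\forall x\in K\}$. *)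

theory Defs
  imports "HOL-Analysis.Analysis"
begin

text \<open>The dual space Y* of a real normed space Y is modelled as the type
  of bounded linear functionals with the operator norm.\<close>

definition weak_star_topology :: "('a::real_normed_vector \<Rightarrow>\<^sub>L real) topology" where
  "weak_star_topology =
     pullback_topology UNIV blinfun_apply (product_topology (\<lambda>_. euclideanreal) UNIV)"

definition wstar_closed_convex_hull ::
  "('a::real_normed_vector \<Rightarrow>\<^sub>L real) set \<Rightarrow> ('a \<Rightarrow>\<^sub>L real) set" where
  "wstar_closed_convex_hull S =
     \<Inter>{C. convex C \<and> closedin weak_star_topology C \<and> S \<subseteq> C}"

definition dual_cone :: "'a::real_normed_vector set \<Rightarrow> ('a \<Rightarrow>\<^sub>L real) set" where
  "dual_cone A = {f. \<forall>y\<in>A. 0 \<le> blinfun_apply f y}"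

definition barrier_cone :: "'a::real_normed_vector set \<Rightarrow> ('a \<Rightarrow>\<^sub>L real) set" where
  "barrier_cone K = {f. bdd_above (blinfun_apply f ` K)}"

definition recession_cone :: "'a::real_normed_vector set \<Rightarrow> 'a set" where
  "recession_cone K = {v. \<forall>x\<in>K. \<forall>l::real. l > 0 \<longrightarrow> x + l *\<^sub>R v \<in> K}"

end

theory Submission
  imports Defs "HOL-Analysis.Finite_Function_Topology"
begin


lemma HB_core:
  fixes p :: "'v::real_vector \<Rightarrow> real" and G0 :: "('v \<times> real) set"
  assumes sub: "\<And>x y. p (x + y) \<le> p x + p y"
    and hom: "\<And>c x. c > 0 \<Longrightarrow> p (c *\<^sub>R x) = c * p x"
    and G0s: "subspace G0" and G0p: "\<And>x a. (x,a) \<in> G0 \<Longrightarrow> a \<le> p x"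
  shows "\<exists>f. linear f \<and> (\<forall>x. f x \<le> p x) \<and> (\<forall>x a. (x,a)\<in>G0 \<longrightarrow> f x = a)"
proof -
  have p0: "p 0 = 0" using hom[of 2 0] by simp
  define \<A> where "\<A> = {G. subspace G \<and> G0 \<subseteq> G \<and> (\<forall>x a. (x,a)\<in>G \<longrightarrow> a \<le> p x)}"
  have "G0 \<in> \<A>" using G0s G0p by (auto simp: \<A>_def)
  hence ne: "\<A> \<noteq> {}" by auto
  have ch: "\<Union>\<C> \<in> \<A>" if Cne: "\<C> \<noteq> {}" and Cch: "subset.chain \<A> \<C>" for \<C>
  proof -
    have C: "\<C> \<subseteq> \<A>" "\<And>X Y. X \<in> \<C> \<Longrightarrow> Y \<in> \<C> \<Longrightarrow> X \<subseteq> Y \<or> Y \<subseteq> X"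
      using Cch by (auto simp: subset.chain_def)
    have sC: "\<And>X. X \<in> \<C> \<Longrightarrow> subspace X" using C(1) by (auto simp: \<A>_def)
    have "subspace (\<Union>\<C>)"
      unfolding subspace_def
    proof (intro conjI ballI allI)
      obtain X where "X \<in> \<C>" using Cne by auto
      thus "0 \<in> \<Union>\<C>" using sC[of X] subspace_0 by blast
    next
      fix x y assume "x \<in> \<Union>\<C>" "y \<in> \<Union>\<C>"
      then obtain X Y where XY: "X \<in> \<C>" "Y \<in> \<C>" "x \<in> X" "y \<in> Y" by auto
      show "x + y \<in> \<Union>\<C>"
        using C(2)[OF XY(1,2)] XY sC subspace_add by (metis UnionI subsetD)
    next
      fix c x assume "x \<in> \<Union>\<C>"
      then obtain X where "X \<in> \<C>" "x \<in> X" by auto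
      thus "c *\<^sub>R x \<in> \<Union>\<C>" using sC subspace_scale by blast
    qed
    moreover have "G0 \<subseteq> \<Union>\<C>" using Cne C(1) by (auto simp: \<A>_def)
    moreover have "\<forall>x a. (x,a)\<in>\<Union>\<C> \<longrightarrow> a \<le> p x" using C(1) by (auto simp: \<A>_def)
    ultimately show ?thesis by (simp add: \<A>_def)
  qed
  obtain M where M: "M \<in> \<A>" and Mmax: "\<And>X. X \<in> \<A> \<Longrightarrow> M \<subseteq> X \<Longrightarrow> X = M"
    using subset_Zorn_nonempty[OF ne ch] by blast
  have Ms: "subspace M" and G0M: "G0 \<subseteq> M" and Mp: "\<And>x a. (x,a)\<in>M \<Longrightarrow> a \<le> p x"
    using M by (auto simp: \<A>_def)
  have M00: "(0,0) \<in> M" using subspace_0[OF Ms] by (simp add: zero_prod_def)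
  have Madd: "(x+y, a+b) \<in> M" if "(x,a) \<in> M" "(y,b) \<in> M" for x y a b
    using subspace_add[OF Ms that] by simp
  have Mscale: "(c *\<^sub>R x, c * a) \<in> M" if "(x,a) \<in> M" for x a c
    using subspace_scale[OF Ms that, of c] by simp
  have func: "a = b" if "(x,a)\<in>M" "(x,b)\<in>M" for x a b
  proof -
    have "(x + (-1) *\<^sub>R x, a + (-1) * b) \<in> M" by (rule Madd[OF that(1) Mscale[OF that(2)]])
    hence 1: "a - b \<le> 0" using Mp p0 by fastforce
    have "(x + (-1) *\<^sub>R x, b + (-1) * a) \<in> M" by (rule Madd[OF that(2) Mscale[OF that(1)]])
    hence "b - a \<le> 0" using Mp p0 by fastforce
    with 1 show ?thesis by simp
  qed
  have total: "\<forall>x. \<exists>a. (x,a) \<in> M"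
  proof (rule ccontr)
    assume "\<not> (\<forall>x. \<exists>a. (x,a) \<in> M)"
    then obtain w where w: "\<And>a. (w,a) \<notin> M" by auto
    define S where "S = {b - p (u - w) | u b. (u,b) \<in> M}"
    define c where "c = Sup S"
    have key: "b - p (u - w) \<le> p (v + w) - b'" if "(u,b)\<in>M" "(v,b')\<in>M" for u b v b'
    proof -
      have "b + b' \<le> p (u + v)" using Mp[OF Madd[OF that]] .
      also have "u + v = (u - w) + (v + w)" by simp
      finally show ?thesis using sub[of "u - w" "v + w"] by linarith
    qed
    have Sne: "S \<noteq> {}" using M00 by (auto simp: S_def)
    have bdd: "bdd_above S" unfolding bdd_above_def S_def using key[OF _ M00] by fastforce
    have c1: "b - p (u - w) \<le> c" if "(u,b)\<in>M" for u b
      unfolding c_def by (rule cSup_upper[OF _ bdd]) (use that in \<open>auto simp: S_def\<close>)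
    have c2: "c \<le> p (v + w) - b'" if "(v,b')\<in>M" for v b'
      unfolding c_def by (rule cSup_least[OF Sne]) (use key[OF _ that] in \<open>auto simp: S_def\<close>)
    define M' where "M' = span (insert (w,c) M)"
    have spanM: "span M = M" using Ms by (simp add: span_eq_iff)
    have "M' \<in> \<A>"
    proof -
      have "subspace M'" by (simp add: M'_def subspace_span)
      moreover have "G0 \<subseteq> M'" using G0M span_superset unfolding M'_def by blast
      moreover have "a \<le> p x" if xa: "(x,a) \<in> M'" for x a
      proof -
        obtain k where "(x,a) - k *\<^sub>R (w,c) \<in> M"
          using xa unfolding M'_def span_insert spanM by auto
        hence kM: "(x - k *\<^sub>R w, a - k * c) \<in> M" by simp
        consider "k = 0" | "k > 0" | "k < 0" by linarith
        then show ?thesis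
        proof cases
          case 1 then show ?thesis using kM Mp by simp
        next
          case 2
          have "((1/k) *\<^sub>R (x - k *\<^sub>R w), (1/k) * (a - k * c)) \<in> M" by (rule Mscale[OF kM])
          from c2[OF this]
          have "c \<le> p ((1/k) *\<^sub>R (x - k *\<^sub>R w) + w) - (1/k) * (a - k * c)" .
          also have "(1/k) *\<^sub>R (x - k *\<^sub>R w) + w = (1/k) *\<^sub>R x" using 2
            by (simp add: algebra_simps)
          also have "p ((1/k) *\<^sub>R x) = (1/k) * p x" using 2 hom by simp
          finally have "c \<le> (1/k) * p x - (1/k) * (a - k * c)" .
          hence "k * c \<le> k * ((1/k) * p x - (1/k) * (a - k * c))"
            using 2 by (simp add: mult_left_mono)
          thus ?thesis using 2 by (simp add: algebra_simps)
        next
          case 3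
          define s where "s = -k"
          have s: "s > 0" using 3 by (simp add: s_def)
          have "((1/s) *\<^sub>R (x - k *\<^sub>R w), (1/s) * (a - k * c)) \<in> M" by (rule Mscale[OF kM])
          from c1[OF this]
          have "(1/s) * (a - k * c) - p ((1/s) *\<^sub>R (x - k *\<^sub>R w) - w) \<le> c" .
          also have "(1/s) *\<^sub>R (x - k *\<^sub>R w) - w = (1/s) *\<^sub>R x" using s
            by (simp add: algebra_simps s_def)
          also have "p ((1/s) *\<^sub>R x) = (1/s) * p x" using s hom by simp
          finally have "(1/s) * (a - k * c) - (1/s) * p x \<le> c" .
          hence "s * ((1/s) * (a - k * c) - (1/s) * p x) \<le> s * c"
            using s by (simp add: mult_left_mono)
          thus ?thesis using s by (simp add: algebra_simps s_def)
        qed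
      qed
      ultimately show ?thesis by (auto simp: \<A>_def)
    qed
    moreover have "M \<subseteq> M'" unfolding M'_def using span_superset by blast
    ultimately have "M' = M" by (rule Mmax)
    moreover have "(w,c) \<in> M'" unfolding M'_def by (simp add: span_base)
    ultimately show False using w by auto
  qed
  define f where "f x = (SOME a. (x,a)\<in>M)" for x
  have fM: "(x, f x) \<in> M" for x unfolding f_def using total by (metis someI_ex)
  have "linear f"
  proof (rule linearI)
    fix x y show "f (x + y) = f x + f y" using func[OF fM Madd[OF fM fM]] .
  next
    fix c x show "f (c *\<^sub>R x) = c *\<^sub>R f x" using func[OF fM Mscale[OF fM]] by simp
  qed
  moreover have "\<forall>x. f x \<le> p x" using fM Mp by blast
  moreover have "\<forall>x a. (x,a)\<in>G0 \<longrightarrow> f x = a" using fM func G0M by blast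
  ultimately show ?thesis by blast
qed



lemma infdist_ge:
  assumes "A \<noteq> {}" "\<And>a. a \<in> A \<Longrightarrow> c \<le> dist x a"
  shows "c \<le> infdist x A"
  using assms by (simp add: infdist_notempty cINF_greatest)

lemma sep_weak:
  fixes K :: "'a::real_normed_vector set"
  assumes conv: "convex K" and ne: "K \<noteq> {}" and d: "d > 0" and far: "\<And>k. k \<in> K \<Longrightarrow> d \<le> dist y k"
  shows "\<exists>f::'a \<Rightarrow>\<^sub>L real. norm f = 1 \<and> (\<forall>x\<in>K. blinfun_apply f x \<le> blinfun_apply f y)"
proof -
  define D where "D = {t *\<^sub>R (k - y) | t k. 0 \<le> t \<and> k \<in> K}"
  define q where "q z = infdist z D" for z
  obtain k0 where k0: "k0 \<in> K" using ne by auto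
  have D0: "0 \<in> D" unfolding D_def using k0 by (auto intro!: exI[of _ 0] exI[of _ k0])
  hence Dne: "D \<noteq> {}" by auto
  have Dadd: "a + b \<in> D" if ha: "a \<in> D" and hb: "b \<in> D" for a b
  proof -
    obtain t1 k1 t2 k2 where a: "a = t1 *\<^sub>R (k1 - y)" "0 \<le> t1" "k1 \<in> K"
      and b: "b = t2 *\<^sub>R (k2 - y)" "0 \<le> t2" "k2 \<in> K" using ha hb by (auto simp: D_def)
    show ?thesis
    proof (cases "t1 + t2 = 0")
      case True
      hence "t1 = 0" "t2 = 0" using a b by auto
      thus ?thesis using a b D0 by simp
    next
      case False
      hence pos: "t1 + t2 > 0" using a b by auto
      define k where "k = (t1/(t1+t2)) *\<^sub>R k1 + (t2/(t1+t2)) *\<^sub>R k2"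
      have "k \<in> K" unfolding k_def
        by (rule convexD[OF conv a(3) b(3)]) (use pos a b in \<open>auto simp: add_divide_distrib[symmetric]\<close>)
      moreover have "(t1+t2) *\<^sub>R k = t1 *\<^sub>R k1 + t2 *\<^sub>R k2"
        using pos by (simp add: k_def scaleR_add_right)
      hence "a + b = (t1+t2) *\<^sub>R (k - y)"
        by (simp add: a b scaleR_diff_right scaleR_add_left)
      ultimately show ?thesis using pos unfolding D_def by (auto intro!: exI[of _ "t1+t2"])
    qed
  qed
  have Dscale: "c *\<^sub>R a \<in> D" if ha: "a \<in> D" and hc: "c \<ge> 0" for a c
  proof -
    obtain t k where a: "a = t *\<^sub>R (k - y)" "0 \<le> t" "k \<in> K" using ha by (auto simp: D_def)
    have "c *\<^sub>R a = (c*t) *\<^sub>R (k - y)" by (simp add: a)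
    thus ?thesis unfolding D_def using a hc by (auto intro!: exI[of _ "c*t"] exI[of _ k])
  qed
  have qsub: "q (x + z) \<le> q x + q z" for x z
  proof -
    have "q (x + z) - q x \<le> dist z b" if b: "b \<in> D" for b
    proof -
      have "q (x + z) - dist z b \<le> dist x a" if a: "a \<in> D" for a
      proof -
        have "q (x + z) \<le> dist (x + z) (a + b)" unfolding q_def by (rule infdist_le[OF Dadd[OF a b]])
        also have "\<dots> \<le> dist x a + dist z b" by (rule dist_triangle_add)
        finally show ?thesis by simp
      qed
      hence "q (x + z) - dist z b \<le> q x" unfolding q_def by (rule infdist_ge[OF Dne])
      thus ?thesis by simp
    qed
    hence "q (x + z) - q x \<le> q z" unfolding q_def by (rule infdist_ge[OF Dne])
    thus ?thesis by simp
  qed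
  have distsc: "dist (c *\<^sub>R u) (c *\<^sub>R v) = c * dist u v" if "c > 0" for c and u v :: 'a
  proof -
    have "c *\<^sub>R u - c *\<^sub>R v = c *\<^sub>R (u - v)" by (simp add: scaleR_diff_right)
    thus ?thesis using that unfolding dist_norm by simp
  qed
  have qhom: "q (c *\<^sub>R x) = c * q x" if c: "c > 0" for c x
  proof (rule antisym)
    have "q (c *\<^sub>R x) / c \<le> dist x a" if a: "a \<in> D" for a
    proof -
      have "q (c *\<^sub>R x) \<le> dist (c *\<^sub>R x) (c *\<^sub>R a)" unfolding q_def by (rule infdist_le[OF Dscale[OF a]]) (use c in auto)
      thus ?thesis using c by (simp add: distsc divide_le_eq mult.commute)
    qed
    hence "q (c *\<^sub>R x) / c \<le> q x" unfolding q_def[of x] by (rule infdist_ge[OF Dne])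
    thus "q (c *\<^sub>R x) \<le> c * q x" using c by (simp add: divide_le_eq mult.commute)
  next
    have "c * q x \<le> dist (c *\<^sub>R x) a" if a: "a \<in> D" for a
    proof -
      have "q x \<le> dist x ((1/c) *\<^sub>R a)" unfolding q_def by (rule infdist_le[OF Dscale[OF a]]) (use c in auto)
      also have "dist x ((1/c) *\<^sub>R a) = (1/c) * dist (c *\<^sub>R x) a"
        using distsc[of "1/c" "c *\<^sub>R x" a] c by simp
      finally show ?thesis using c by (simp add: field_simps)
    qed
    thus "c * q x \<le> q (c *\<^sub>R x)" unfolding q_def[of "c *\<^sub>R x"] by (rule infdist_ge[OF Dne])
  qed
  have qle: "q z \<le> norm z" for z
    using infdist_le[OF D0, of z] by (simp add: q_def)
  have qnn: "0 \<le> q z" for z by (simp add: q_def infdist_nonneg)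
  define z1 where "z1 = y - k0"
  have qz1: "d \<le> q z1" unfolding q_def
  proof (rule infdist_ge[OF Dne])
    fix a assume "a \<in> D"
    then obtain t k where a: "a = t *\<^sub>R (k - y)" "0 \<le> t" "k \<in> K" by (auto simp: D_def)
    define m where "m = (1/(1+t)) *\<^sub>R k0 + (t/(1+t)) *\<^sub>R k"
    have mK: "m \<in> K" unfolding m_def
      by (rule convexD[OF conv k0 a(3)]) (use a in \<open>auto simp: add_divide_distrib[symmetric]\<close>)
    have "(1+t) *\<^sub>R m = k0 + t *\<^sub>R k" using a(2) by (simp add: m_def scaleR_add_right)
    hence eq: "z1 - a = (1+t) *\<^sub>R (y - m)"
      by (simp add: z1_def a scaleR_diff_right scaleR_add_left algebra_simps)
    have "dist z1 a = (1+t) * dist y m" using a(2) by (simp add: dist_norm eq)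
    moreover have "d \<le> dist y m" using far[OF mK] .
    ultimately show "d \<le> dist z1 a" using a(2) d
      by (smt (verit) mult_le_cancel_right1 zero_le_dist)
  qed
  define G0 where "G0 = span {(z1, q z1)}"
  have G0s: "subspace G0" by (simp add: G0_def subspace_span)
  have G0p: "a \<le> q x" if hxa: "(x,a) \<in> G0" for x a
  proof -
    obtain s where s: "(x,a) = s *\<^sub>R (z1, q z1)" using hxa by (auto simp: G0_def span_singleton)
    hence xa: "x = s *\<^sub>R z1" "a = s * q z1" by auto
    show ?thesis
    proof (cases "s > 0")
      case True thus ?thesis using qhom xa by simp
    next
      case False thus ?thesis using xa qnn[of z1] qnn[of x]
        by (smt (verit) mult_nonpos_nonneg)
    qed
  qed
  obtain g where g: "linear g" "\<And>x. g x \<le> q x" "\<And>x a. (x,a)\<in>G0 \<Longrightarrow> g x = a"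
    using HB_core[of q G0, OF qsub qhom G0s G0p] by blast
  have gz1: "g z1 = q z1" using g(3)[of z1 "q z1"] by (simp add: G0_def span_base)
  have gb: "norm (g x) \<le> norm x * 1" for x
  proof -
    have "g x \<le> norm x" using g(2) qle order_trans by blast
    moreover have "- g x \<le> norm x" using g(2)[of "-x"] qle[of "-x"] linear_neg[OF g(1)] by simp
    ultimately show ?thesis by simp
  qed
  have bl: "bounded_linear g"
    by (rule bounded_linear_intro[OF linear_add[OF g(1)] linear_scale[OF g(1)] gb])
  define F where "F = Blinfun g"
  have Fapp: "blinfun_apply F = g" unfolding F_def using bl by (simp add: bounded_linear_Blinfun_apply)
  have "F \<noteq> 0"
  proof
    assume "F = 0"
    hence "blinfun_apply F z1 = 0" by simp
    thus False using gz1 qz1 d by (simp add: Fapp)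
  qed
  hence nF: "norm F > 0" by simp
  define f where "f = (1 / norm F) *\<^sub>R F"
  have "norm f = 1" using nF by (simp add: f_def)
  moreover have "blinfun_apply f x \<le> blinfun_apply f y" if "x \<in> K" for x
  proof -
    have "x - y \<in> D" unfolding D_def using that by (auto intro!: exI[of _ 1])
    hence "g (x - y) \<le> 0" using g(2)[of "x - y"] by (simp add: q_def)
    hence "g x \<le> g y" using linear_diff[OF g(1)] by simp
    hence "g x / norm F \<le> g y / norm F" using nF by (simp add: divide_right_mono)
    thus ?thesis by (simp add: f_def Fapp blinfun.scaleR_left)
  qed
  ultimately show ?thesis by blast
qed



lemma sep_gap:
  fixes K :: "'a::real_normed_vector set"
  assumes conv: "convex K" and ne: "K \<noteq> {}" and d: "d > 0" and far: "\<And>k. k \<in> K \<Longrightarrow> d \<le> dist y k"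
  shows "\<exists>f::'a \<Rightarrow>\<^sub>L real. norm f = 1 \<and> (\<forall>x\<in>K. blinfun_apply f x \<le> blinfun_apply f y - d/4)"
proof -
  define K' where "K' = (\<Union>k\<in>K. \<Union>u\<in>cball 0 (d/2). {k + u})"
  have cK': "convex K'" unfolding K'_def by (rule convex_sums[OF conv convex_cball])
  have neK': "K' \<noteq> {}"
  proof -
    obtain k where "k \<in> K" using ne by auto
    hence "k + 0 \<in> K'" using d unfolding K'_def by (intro UN_I[of k] UN_I[of 0]) auto
    thus ?thesis by auto
  qed
  have farK': "d/2 \<le> dist y k'" if hk: "k' \<in> K'" for k'
  proof -
    obtain k u where ku: "k \<in> K" "norm u \<le> d/2" "k' = k + u" using hk unfolding K'_def by auto
    have "dist y k \<le> dist y (k + u) + dist (k + u) k" by (rule dist_triangle)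
    moreover have "dist (k + u) k = norm u" by (simp add: dist_norm)
    ultimately show ?thesis using far[OF ku(1)] ku by simp
  qed
  obtain f :: "'a \<Rightarrow>\<^sub>L real" where f: "norm f = 1" "\<And>x. x \<in> K' \<Longrightarrow> blinfun_apply f x \<le> blinfun_apply f y"
    using sep_weak[OF cK' neK' _ farK'] d by auto
  have "\<exists>x. norm (blinfun_apply f x) > (1/2) * norm x"
  proof (rule ccontr)
    assume "\<not> ?thesis"
    hence "norm f \<le> 1/2" by (intro norm_blinfun_bound) (auto simp: not_less)
    thus False using f(1) by simp
  qed
  then obtain x where x: "norm (blinfun_apply f x) > (1/2) * norm x" by blast
  have x0: "x \<noteq> 0" using x by auto
  hence nx: "norm x > 0" by simp
  define u0 where "u0 = (if blinfun_apply f x \<ge> 0 then x else -x)"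
  have fu0: "blinfun_apply f u0 = \<bar>blinfun_apply f x\<bar>" by (simp add: u0_def blinfun.minus_right)
  have nu0: "norm u0 = norm x" by (simp add: u0_def)
  define u where "u = (d / (2 * norm x)) *\<^sub>R u0"
  have nu: "norm u = d/2" using nx d by (simp add: u_def nu0)
  have "blinfun_apply f u = (d / (2 * norm x)) * \<bar>blinfun_apply f x\<bar>"
    by (simp add: u_def blinfun.scaleR_right fu0)
  also have "\<dots> > (d / (2 * norm x)) * ((1/2) * norm x)"
    using x nx d by (intro mult_strict_left_mono) auto
  also have "(d / (2 * norm x)) * ((1/2) * norm x) = d/4" using nx by simp
  finally have fu: "blinfun_apply f u > d/4" .
  have "\<forall>k\<in>K. blinfun_apply f k \<le> blinfun_apply f y - d/4"
  proof
    fix k assume k: "k \<in> K"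
    have "u \<in> cball 0 (d/2)" using nu by simp
    hence "k + u \<in> K'" unfolding K'_def using k by blast
    hence "blinfun_apply f (k + u) \<le> blinfun_apply f y" by (rule f(2))
    thus "blinfun_apply f k \<le> blinfun_apply f y - d/4" using fu by (simp add: blinfun.add_right)
  qed
  with f(1) show ?thesis by blast
qed

lemma sep_closed:
  fixes K :: "'a::real_normed_vector set"
  assumes "closed K" "convex K" "K \<noteq> {}" "y \<notin> K"
  shows "\<exists>f::'a \<Rightarrow>\<^sub>L real. norm f = 1 \<and> (\<forall>x\<in>K. blinfun_apply f x \<le> blinfun_apply f y)"
proof -
  have "infdist y K > 0" using infdist_pos_not_in_closed assms by blast
  moreover have "infdist y K \<le> dist y k" if "k \<in> K" for k using infdist_le[OF that] .
  ultimately show ?thesis using sep_weak[OF assms(2,3)] by blast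
qed

lemma int_dual_lb:
  fixes f :: "'a::real_normed_vector \<Rightarrow>\<^sub>L real"
  assumes sub: "ball e r \<subseteq> C" and r: "r > 0" and pos: "\<And>x. x \<in> C \<Longrightarrow> 0 \<le> blinfun_apply f x"
  shows "r/2 * norm f \<le> blinfun_apply f e"
proof -
  have "e \<in> C" using sub r by (meson centre_in_ball subsetD)
  hence fe: "0 \<le> blinfun_apply f e" by (rule pos)
  have bd: "norm (blinfun_apply f u) \<le> (2 * blinfun_apply f e / r) * norm u" for u
  proof (cases "u = 0")
    case True thus ?thesis by simp
  next
    case False
    hence nu: "norm u > 0" by simp
    define v where "v = (r / (2 * norm u)) *\<^sub>R u"
    have nv: "norm v = r/2" using nu r by (simp add: v_def)
    have "e - v \<in> C" "e + v \<in> C" using sub nv r by (auto simp: dist_norm)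
    hence "0 \<le> blinfun_apply f (e - v)" "0 \<le> blinfun_apply f (e + v)" using pos by auto
    hence "\<bar>blinfun_apply f v\<bar> \<le> blinfun_apply f e" by (simp add: blinfun.diff_right blinfun.add_right)
    moreover have "blinfun_apply f v = (r / (2 * norm u)) * blinfun_apply f u"
      by (simp add: v_def blinfun.scaleR_right)
    ultimately have "(r / (2 * norm u)) * \<bar>blinfun_apply f u\<bar> \<le> blinfun_apply f e"
      using nu r by (simp add: abs_mult)
    hence "\<bar>blinfun_apply f u\<bar> \<le> blinfun_apply f e * (2 * norm u) / r"
      using nu r by (simp add: field_simps)
    thus ?thesis by (simp add: field_simps)
  qed
  have "norm f \<le> 2 * blinfun_apply f e / r"
    by (rule norm_blinfun_bound) (use fe r bd in auto)
  thus ?thesis using r by (simp add: field_simps)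
qed

lemma apply_near:
  fixes f :: "'a::real_normed_vector \<Rightarrow>\<^sub>L real"
  assumes "norm f = 1"
  shows "blinfun_apply f e \<le> blinfun_apply f y + dist e y"
proof -
  have "blinfun_apply f (e - y) \<le> norm f * norm (e - y)"
    using norm_blinfun[of f "e - y"] by simp
  thus ?thesis using assms by (simp add: blinfun.diff_right dist_norm)
qed

lemma cone_char:
  fixes A :: "'a::real_normed_vector set"
  assumes cl: "closed A" and cc: "convex_cone A"
  shows "e \<in> interior A \<longleftrightarrow> (\<exists>\<delta>>0. \<forall>f\<in>sphere 0 1 \<inter> dual_cone A. \<delta> \<le> blinfun_apply f e)"
proof
  assume "e \<in> interior A"
  then obtain r where r: "r > 0" "ball e r \<subseteq> A" by (auto simp: mem_interior)
  have "r/2 \<le> blinfun_apply f e" if "f \<in> sphere 0 1 \<inter> dual_cone A" for f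
    using int_dual_lb[OF r(2) r(1), of f] that by (auto simp: dual_cone_def)
  thus "\<exists>\<delta>>0. \<forall>f\<in>sphere 0 1 \<inter> dual_cone A. \<delta> \<le> blinfun_apply f e" using r(1) by (intro exI[of _ "r/2"]) auto
next
  assume "\<exists>\<delta>>0. \<forall>f\<in>sphere 0 1 \<inter> dual_cone A. \<delta> \<le> blinfun_apply f e"
  then obtain \<delta> where \<delta>: "\<delta> > 0" "\<And>f. f \<in> sphere 0 1 \<inter> dual_cone A \<Longrightarrow> \<delta> \<le> blinfun_apply f e" by blast
  show "e \<in> interior A"
  proof (rule ccontr)
    assume "e \<notin> interior A"
    hence "\<not> ball e \<delta> \<subseteq> A" using \<delta>(1) by (auto simp: mem_interior)
    then obtain y where y: "dist e y < \<delta>" "y \<notin> A" by (meson mem_ball subsetI)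
    have cvx: "convex A" and ne: "A \<noteq> {}" using cc by (auto simp: convex_cone_def)
    obtain g :: "'a \<Rightarrow>\<^sub>L real" where g: "norm g = 1" "\<And>x. x \<in> A \<Longrightarrow> blinfun_apply g x \<le> blinfun_apply g y"
      using sep_closed[OF cl cvx ne y(2)] by blast
    have gy: "0 \<le> blinfun_apply g y" using g(2)[OF convex_cone_contains_0[OF cc]] by simp
    have gx: "blinfun_apply g x \<le> 0" if x: "x \<in> A" for x
    proof (rule ccontr)
      assume "\<not> ?thesis"
      hence gx: "blinfun_apply g x > 0" by simp
      define t where "t = (\<bar>blinfun_apply g y\<bar> + 1) / blinfun_apply g x"
      have "t \<ge> 0" using gx by (simp add: t_def)
      hence "t *\<^sub>R x \<in> A" using convex_cone_scaleR[OF cc _ x] by simp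
      hence "blinfun_apply g (t *\<^sub>R x) \<le> blinfun_apply g y" by (rule g(2))
      hence "t * blinfun_apply g x \<le> blinfun_apply g y" by (simp add: blinfun.scaleR_right)
      moreover have "t * blinfun_apply g x = \<bar>blinfun_apply g y\<bar> + 1" using gx by (simp add: t_def)
      ultimately show False by linarith
    qed
    have "-g \<in> sphere 0 1 \<inter> dual_cone A" using g(1) gx by (auto simp: dual_cone_def blinfun.minus_left)
    hence "\<delta> \<le> blinfun_apply (-g) e" by (rule \<delta>(2))
    moreover have "blinfun_apply (-g) e \<le> blinfun_apply (-g) y + dist e y"
      by (rule apply_near) (simp add: g(1))
    ultimately show False using gy y(1) by (simp add: blinfun.minus_left)
  qed
qed

lemma rec_char:
  fixes K :: "'a::real_normed_vector set"
  assumes cl: "closed K" and cvx: "convex K" and ne: "K \<noteq> {}"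
  shows "e \<in> interior (recession_cone K) \<longleftrightarrow>
    (\<exists>\<delta>>0. \<forall>f\<in>sphere 0 1 \<inter> uminus ` barrier_cone K. \<delta> \<le> blinfun_apply f e)"
proof
  assume "e \<in> interior (recession_cone K)"
  then obtain r where r: "r > 0" "ball e r \<subseteq> recession_cone K" by (auto simp: mem_interior)
  obtain x0 where x0: "x0 \<in> K" using ne by auto
  have "r/2 \<le> blinfun_apply f e" if hf: "f \<in> sphere 0 1 \<inter> uminus ` barrier_cone K" for f
  proof -
    obtain g where fg: "f = - g" "bdd_above (blinfun_apply g ` K)" "norm f = 1"
      using hf by (auto simp: barrier_cone_def)
    then obtain B where B: "\<And>x. x \<in> K \<Longrightarrow> blinfun_apply g x \<le> B" by (auto simp: bdd_above_def)
    have "0 \<le> blinfun_apply f v" if v: "v \<in> recession_cone K" for v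
    proof (rule ccontr)
      assume "\<not> ?thesis"
      hence gv: "blinfun_apply g v > 0" using fg(1) by (simp add: blinfun.minus_left)
      define l where "l = (\<bar>B - blinfun_apply g x0\<bar> + 1) / blinfun_apply g v"
      have l: "l > 0" using gv by (simp add: l_def)
      have "x0 + l *\<^sub>R v \<in> K" using v x0 l by (auto simp: recession_cone_def)
      hence "blinfun_apply g x0 + l * blinfun_apply g v \<le> B" using B
        by (fastforce simp: blinfun.add_right blinfun.scaleR_right)
      moreover have "l * blinfun_apply g v = \<bar>B - blinfun_apply g x0\<bar> + 1" using gv by (simp add: l_def)
      ultimately show False by linarith
    qed
    from int_dual_lb[OF r(2) r(1), of f, OF this] fg(3) show ?thesis by simp
  qed
  thus "\<exists>\<delta>>0. \<forall>f\<in>sphere 0 1 \<inter> uminus ` barrier_cone K. \<delta> \<le> blinfun_apply f e"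
    using r(1) by (intro exI[of _ "r/2"]) auto
next
  assume "\<exists>\<delta>>0. \<forall>f\<in>sphere 0 1 \<inter> uminus ` barrier_cone K. \<delta> \<le> blinfun_apply f e"
  then obtain \<delta> where \<delta>: "\<delta> > 0" "\<And>f. f \<in> sphere 0 1 \<inter> uminus ` barrier_cone K \<Longrightarrow> \<delta> \<le> blinfun_apply f e" by blast
  show "e \<in> interior (recession_cone K)"
  proof (rule ccontr)
    assume "e \<notin> interior (recession_cone K)"
    hence "\<not> ball e \<delta> \<subseteq> recession_cone K" using \<delta>(1) by (auto simp: mem_interior)
    then obtain y where y: "dist e y < \<delta>" "y \<notin> recession_cone K" by (meson mem_ball subsetI)
    then obtain x l where xl: "x \<in> K" "l > 0" "x + l *\<^sub>R y \<notin> K" by (auto simp: recession_cone_def)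
    obtain g :: "'a \<Rightarrow>\<^sub>L real" where g: "norm g = 1"
      "\<And>z. z \<in> K \<Longrightarrow> blinfun_apply g z \<le> blinfun_apply g (x + l *\<^sub>R y)"
      using sep_closed[OF cl cvx ne xl(3)] by blast
    have "blinfun_apply g x \<le> blinfun_apply g x + l * blinfun_apply g y"
      using g(2)[OF xl(1)] by (simp add: blinfun.add_right blinfun.scaleR_right)
    hence gy: "0 \<le> blinfun_apply g y" using xl(2) by (simp add: zero_le_mult_iff)
    have "g \<in> barrier_cone K" unfolding barrier_cone_def bdd_above_def using g(2) by auto
    hence "-g \<in> uminus ` barrier_cone K" by auto
    hence "-g \<in> sphere 0 1 \<inter> uminus ` barrier_cone K" using g(1) by auto
    hence "\<delta> \<le> blinfun_apply (-g) e" by (rule \<delta>(2))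
    moreover have "blinfun_apply (-g) e \<le> blinfun_apply (-g) y + dist e y"
      by (rule apply_near) (simp add: g(1))
    ultimately show False using gy y(1) by (simp add: blinfun.minus_left)
  qed
qed



lemma wst_topspace: "topspace (weak_star_topology :: ('a::real_normed_vector \<Rightarrow>\<^sub>L real) topology) = UNIV"
  unfolding weak_star_topology_def by (simp add: topspace_pullback_topology PiE_UNIV_domain)

lemma wst_eval_cont:
  "continuous_map (weak_star_topology :: ('a::real_normed_vector \<Rightarrow>\<^sub>L real) topology) euclideanreal (\<lambda>f. blinfun_apply f e)"
proof -
  have "continuous_map (weak_star_topology :: ('a \<Rightarrow>\<^sub>L real) topology) euclideanreal ((\<lambda>h. h e) \<circ> blinfun_apply)"
    unfolding weak_star_topology_def
    by (rule continuous_map_pullback) (rule continuous_map_product_projection, simp)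
  thus ?thesis by (simp add: o_def)
qed

lemma wstar_fwd:
  fixes M :: "('a::real_normed_vector \<Rightarrow>\<^sub>L real) set"
  assumes d: "\<delta> > 0" and M: "\<And>f. f \<in> M \<Longrightarrow> \<delta> \<le> blinfun_apply f e"
  shows "0 \<notin> wstar_closed_convex_hull M"
proof -
  define H where "H = {f :: 'a \<Rightarrow>\<^sub>L real. \<delta> \<le> blinfun_apply f e}"
  have "convex H" unfolding convex_def H_def
  proof (intro allI impI ballI, clarsimp simp: blinfun.add_left blinfun.scaleR_left)
    fix x y :: "'a \<Rightarrow>\<^sub>L real" and u v :: real
    assume h: "\<delta> \<le> blinfun_apply x e" "\<delta> \<le> blinfun_apply y e" "0 \<le> u" "0 \<le> v" "u + v = 1"
    have "u * \<delta> \<le> u * blinfun_apply x e" "v * \<delta> \<le> v * blinfun_apply y e"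
      using h by (auto intro: mult_left_mono)
    moreover have "u * \<delta> + v * \<delta> = \<delta>" using h(5) by (simp add: distrib_right[symmetric])
    ultimately show "\<delta> \<le> u * blinfun_apply x e + v * blinfun_apply y e" by linarith
  qed
  moreover have "closedin weak_star_topology H"
  proof -
    have "closedin weak_star_topology {f \<in> topspace weak_star_topology. blinfun_apply f e \<in> {\<delta>..}}"
      by (rule closedin_continuous_map_preimage[OF wst_eval_cont]) (simp add: closed_closedin[symmetric])
    thus ?thesis by (simp add: wst_topspace H_def)
  qed
  moreover have "M \<subseteq> H" using M by (auto simp: H_def)
  ultimately have "wstar_closed_convex_hull M \<subseteq> H" unfolding wstar_closed_convex_hull_def by blast
  moreover have "0 \<notin> H" using d by (simp add: H_def)
  ultimately show ?thesis by blast
qed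

lemma pm_lookup_scaleR: "Poly_Mapping.lookup (c *\<^sub>R x) i = c * Poly_Mapping.lookup (x :: 'b \<Rightarrow>\<^sub>0 real) i"
proof -
  have "finite {i. c *\<^sub>R Poly_Mapping.lookup x i \<noteq> 0}"
    by (rule finite_subset[OF _ finite_keys[of x]]) (auto simp: in_keys_iff)
  thus ?thesis by (simp add: scaleR_poly_mapping_def)
qed

lemma pm_single_scale: "Poly_Mapping.single i (c * a) = c *\<^sub>R Poly_Mapping.single i (a::real)"
  by (rule poly_mapping_eqI) (simp add: pm_lookup_scaleR lookup_single when_def)

lemma pm_coord_le: "\<bar>Poly_Mapping.lookup x i\<bar> \<le> norm (x :: 'b \<Rightarrow>\<^sub>0 real)"
proof (cases "i \<in> Poly_Mapping.keys x")
  case True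
  have "norm x = (\<Sum>n\<in>Poly_Mapping.keys x. \<bar>Poly_Mapping.lookup x n\<bar>)"
    by (simp add: norm_poly_mapping_def dist_poly_mapping_def dist_real_def)
  also have "\<bar>Poly_Mapping.lookup x i\<bar> \<le> \<dots>"
    by (rule member_le_sum[OF True]) auto
  finally show ?thesis by simp
next
  case False
  hence "Poly_Mapping.lookup x i = 0" by (simp add: in_keys_iff)
  thus ?thesis by simp
qed



lemma finite_eps:
  assumes "finite J" "\<And>i. i \<in> J \<Longrightarrow> \<exists>e>0. P i e" "\<And>i e e'. P i e \<Longrightarrow> 0 < e' \<Longrightarrow> e' \<le> e \<Longrightarrow> P i e'"
  shows "\<exists>e>(0::real). \<forall>i\<in>J. P i e"
proof -
  obtain E where E: "\<And>i. i \<in> J \<Longrightarrow> E i > 0 \<and> P i (E i)" using assms(2) by metis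
  define e where "e = Min (insert 1 (E ` J))"
  have "e > 0" unfolding e_def using assms(1) E by (subst Min_gr_iff) auto
  moreover have "e \<le> E i" if "i \<in> J" for i unfolding e_def using assms(1) that by (intro Min_le) auto
  ultimately show ?thesis using assms(3) E by blast
qed

lemma wstar_bwd:
  fixes M :: "('a::real_normed_vector \<Rightarrow>\<^sub>L real) set"
  assumes n0: "0 \<notin> wstar_closed_convex_hull M"
  shows "\<exists>e \<delta>. \<delta> > 0 \<and> (\<forall>f\<in>M. \<delta> \<le> blinfun_apply f e)"
proof -
  define W where "W = wstar_closed_convex_hull M"
  have famne: "{C. convex C \<and> closedin weak_star_topology C \<and> M \<subseteq> C} \<noteq> {}"
  proof -
    have "closedin (weak_star_topology :: ('a \<Rightarrow>\<^sub>L real) topology) UNIV"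
      using closedin_topspace[of "weak_star_topology :: ('a \<Rightarrow>\<^sub>L real) topology"] by (simp add: wst_topspace)
    hence "UNIV \<in> {C. convex C \<and> closedin weak_star_topology C \<and> M \<subseteq> C}" by simp
    thus ?thesis by blast
  qed
  have clW: "closedin weak_star_topology W" unfolding W_def wstar_closed_convex_hull_def
    by (rule closedin_Inter[OF famne]) auto
  have cvW: "convex W" unfolding W_def wstar_closed_convex_hull_def by (rule convex_Inter) auto
  have MW: "M \<subseteq> W" unfolding W_def wstar_closed_convex_hull_def by auto
  have "openin weak_star_topology (UNIV - W)"
    using clW by (simp add: closedin_def wst_topspace)
  then obtain V where V: "openin (product_topology (\<lambda>_. euclideanreal) UNIV) V"
    and VW: "UNIV - W = blinfun_apply -` V \<inter> UNIV"
    unfolding weak_star_topology_def openin_pullback_topology by blast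
  have "(0 :: 'a \<Rightarrow>\<^sub>L real) \<in> UNIV - W" using n0 by (simp add: W_def)
  hence "blinfun_apply (0 :: 'a \<Rightarrow>\<^sub>L real) \<in> V" using VW by blast
  moreover have "blinfun_apply (0 :: 'a \<Rightarrow>\<^sub>L real) = (\<lambda>_. 0)" by (simp add: fun_eq_iff)
  ultimately have "(\<lambda>_. 0) \<in> V" by simp
  then obtain U where U: "finite {i \<in> (UNIV::'a set). U i \<noteq> topspace euclideanreal}"
    "\<And>i. openin euclideanreal (U i)" "(\<lambda>_. 0) \<in> Pi\<^sub>E UNIV U" "Pi\<^sub>E UNIV U \<subseteq> V"
  proof -
    from V have "\<forall>x\<in>V. \<exists>U. finite {i \<in> (UNIV::'a set). U i \<noteq> topspace euclideanreal} \<and>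
        (\<forall>i\<in>UNIV. openin euclideanreal (U i)) \<and> x \<in> Pi\<^sub>E UNIV U \<and> Pi\<^sub>E UNIV U \<subseteq> V"
      by (simp only: openin_product_topology_alt)
    from bspec[OF this \<open>(\<lambda>_. 0) \<in> V\<close>] show ?thesis using that by blast
  qed
  define J where "J = {i. U i \<noteq> UNIV}"
  have eqJ: "{i \<in> (UNIV::'a set). U i \<noteq> topspace euclideanreal} = J" unfolding J_def topspace_euclidean by blast
  have fJ: "finite J" using U(1) unfolding eqJ .
  have ball0: "\<exists>e>0. \<forall>t. \<bar>t\<bar> < e \<longrightarrow> t \<in> U i" for i
  proof -
    have oU: "open (U i)" using U(2)[of i] by simp
    have "(\<lambda>_. 0::real) i \<in> U i" using U(3) unfolding PiE_UNIV_domain Pi_def by blast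
    hence "0 \<in> U i" by simp
    then obtain e where e: "e > 0" "ball 0 e \<subseteq> U i" using oU open_contains_ball_eq by blast
    have "\<forall>t. \<bar>t\<bar> < e \<longrightarrow> t \<in> U i"
    proof (intro allI impI)
      fix t :: real assume "\<bar>t\<bar> < e"
      hence "t \<in> ball 0 e" by (simp add: dist_real_def)
      thus "t \<in> U i" using e(2) by blast
    qed
    thus ?thesis using e(1) by blast
  qed
  then obtain E where E: "\<And>i. E i > 0" "\<And>i t. \<bar>t\<bar> < E i \<Longrightarrow> t \<in> U i" by metis
  define \<epsilon> where "\<epsilon> = Min (insert 1 (E ` J))"
  have \<epsilon>0: "\<epsilon> > 0" unfolding \<epsilon>_def using fJ E(1) by (subst Min_gr_iff) auto
  have \<epsilon>le: "\<epsilon> \<le> E i" if "i \<in> J" for i unfolding \<epsilon>_def using fJ that by (intro Min_le) auto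
  have "\<exists>e>0. \<forall>i\<in>J. \<forall>t. \<bar>t\<bar> < e \<longrightarrow> t \<in> U i"
    using \<epsilon>0 \<epsilon>le E(2) by (intro exI[of _ \<epsilon>]) force
  then obtain \<epsilon> where \<epsilon>: "\<epsilon> > 0" "\<And>i t. i \<in> J \<Longrightarrow> \<bar>t\<bar> < \<epsilon> \<Longrightarrow> t \<in> U i" by blast
  have outside: "\<exists>i\<in>J. \<epsilon> \<le> \<bar>blinfun_apply f i\<bar>" if fW: "f \<in> W" for f
  proof (rule ccontr)
    assume nt: "\<not> ?thesis"
    have "blinfun_apply f i \<in> U i" for i
    proof (cases "U i = UNIV")
      case True thus ?thesis by simp
    next
      case False
      hence iJ: "i \<in> J" by (simp add: J_def)
      hence "\<bar>blinfun_apply f i\<bar> < \<epsilon>" using nt by (simp add: not_le)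
      thus ?thesis using \<epsilon>(2)[OF iJ] by blast
    qed
    hence "\<forall>i. blinfun_apply f i \<in> U i" by blast
    hence "blinfun_apply f \<in> V" using U(4) by (auto simp: PiE_UNIV_domain)
    hence "f \<in> UNIV - W" using VW by blast
    thus False using fW by blast
  qed
  show ?thesis
  proof (cases "W = {}")
    case True
    hence "M = {}" using MW by blast
    thus ?thesis by (intro exI[of _ 0] exI[of _ 1]) simp
  next
    case False
    define T where "T f = (\<Sum>i\<in>J. Poly_Mapping.single i (blinfun_apply f i))" for f :: "'a \<Rightarrow>\<^sub>L real"
    have Ts: "T f = (\<Sum>i\<in>J. blinfun_apply f i *\<^sub>R Poly_Mapping.single i 1)" for f
      unfolding T_def by (intro sum.cong refl) (metis pm_single_scale mult.right_neutral)
    have linT: "linear T"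
    proof (rule linearI)
      fix f g show "T (f + g) = T f + T g"
        by (simp add: Ts blinfun.add_left scaleR_add_left sum.distrib)
    next
      fix c f show "T (c *\<^sub>R f) = c *\<^sub>R T f"
        by (simp add: Ts blinfun.scaleR_left scaleR_sum_right)
    qed
    have Tl: "Poly_Mapping.lookup (T f) i = blinfun_apply f i" if "i \<in> J" for f i
      using that fJ by (simp add: T_def lookup_sum lookup_single when_def)
    have cv: "convex (T ` W)" by (rule convex_linear_image[OF linT cvW])
    have ne: "T ` W \<noteq> {}" using False by simp
    have far: "\<epsilon> \<le> dist 0 k" if hk: "k \<in> T ` W" for k
    proof -
      obtain f where f: "f \<in> W" "k = T f" using hk by blast
      obtain i where i: "i \<in> J" "\<epsilon> \<le> \<bar>blinfun_apply f i\<bar>" using outside[OF f(1)] by blast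
      have "\<bar>blinfun_apply f i\<bar> \<le> norm (T f)" using pm_coord_le[of "T f" i] Tl[OF i(1)] by simp
      thus ?thesis using i f by simp
    qed
    obtain \<psi> :: "('a \<Rightarrow>\<^sub>0 real) \<Rightarrow>\<^sub>L real" where \<psi>: "norm \<psi> = 1"
      "\<And>k. k \<in> T ` W \<Longrightarrow> blinfun_apply \<psi> k \<le> blinfun_apply \<psi> 0 - \<epsilon>/4"
      using sep_gap[OF cv ne \<epsilon>(1) far] by blast
    define e where "e = - (\<Sum>i\<in>J. blinfun_apply \<psi> (Poly_Mapping.single i 1) *\<^sub>R i)"
    have lin\<psi>: "linear (blinfun_apply \<psi>)" by (simp add: bounded_linear.linear blinfun.bounded_linear_right)
    have "\<epsilon>/4 \<le> blinfun_apply f e" if fM: "f \<in> M" for f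
    proof -
      have lf: "linear (blinfun_apply f)" by (simp add: bounded_linear.linear blinfun.bounded_linear_right)
      have "blinfun_apply \<psi> (T f) = (\<Sum>i\<in>J. blinfun_apply f i * blinfun_apply \<psi> (Poly_Mapping.single i 1))"
        by (simp add: Ts linear_sum[OF lin\<psi>] o_def blinfun.scaleR_right)
      moreover have "blinfun_apply f e = - (\<Sum>i\<in>J. blinfun_apply f i * blinfun_apply \<psi> (Poly_Mapping.single i 1))"
        by (simp add: e_def linear_sum[OF lf] o_def blinfun.scaleR_right blinfun.minus_right mult.commute)
      moreover have "blinfun_apply \<psi> (T f) \<le> - (\<epsilon>/4)" using \<psi>(2)[of "T f"] fM MW by auto
      ultimately show ?thesis by simp
    qed
    thus ?thesis using \<epsilon>(1) by (intro exI[of _ e] exI[of _ "\<epsilon>/4"]) auto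
  qed
qed

lemma wstar_char:
  fixes M :: "('a::real_normed_vector \<Rightarrow>\<^sub>L real) set"
  shows "(\<exists>e \<delta>. \<delta> > 0 \<and> (\<forall>f\<in>M. \<delta> \<le> blinfun_apply f e)) \<longleftrightarrow> 0 \<notin> wstar_closed_convex_hull M"
  using wstar_fwd wstar_bwd by metis


theorem lemma3p6:
  fixes Ytype :: "'a::real_normed_vector itself"
  shows
   "(\<forall>A::'a set. \<forall>e. closed A \<and> convex_cone A \<and> A \<noteq> UNIV \<longrightarrow>
        (e \<in> interior A \<longleftrightarrow>
           (INF f\<in>sphere 0 1 \<inter> dual_cone A. blinfun_apply f e) > 0))
    \<and> (\<forall>A::'a set. closed A \<and> convex_cone A \<longrightarrow>
        (interior A \<noteq> {} \<longleftrightarrow>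
           A = UNIV \<or> 0 \<notin> wstar_closed_convex_hull (sphere 0 1 \<inter> dual_cone A)))
    \<and> (\<forall>K::'a set. K \<noteq> {} \<and> closed K \<and> convex K \<longrightarrow>
        (interior (recession_cone K) \<noteq> {} \<longleftrightarrow>
           K = UNIV \<or>
           0 \<notin> wstar_closed_convex_hull (sphere 0 1 \<inter> uminus ` barrier_cone K)))"
proof (intro conjI allI impI)
  fix A :: "'a set" and e :: 'a
  assume h: "closed A \<and> convex_cone A \<and> A \<noteq> UNIV"
  define \<Phi> where "\<Phi> = sphere (0 :: 'a \<Rightarrow>\<^sub>L real) 1 \<inter> dual_cone A"
  have cc: "e' \<in> interior A \<longleftrightarrow> (\<exists>\<delta>>0. \<forall>f\<in>\<Phi>. \<delta> \<le> blinfun_apply f e')" for e'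
    unfolding \<Phi>_def using cone_char h by blast
  have \<Phi>ne: "\<Phi> \<noteq> {}"
  proof
    assume "\<Phi> = {}"
    hence "\<exists>\<delta>>0. \<forall>f\<in>\<Phi>. \<delta> \<le> blinfun_apply f e'" for e' by (intro exI[of _ 1]) simp
    hence "e' \<in> interior A" for e' using cc by blast
    hence "interior A = UNIV" by auto
    hence "A = UNIV" using interior_subset[of A] by auto
    thus False using h by simp
  qed
  have bdd: "bdd_below ((\<lambda>f. blinfun_apply f e) ` \<Phi>)"
  proof (rule bdd_belowI2)
    fix f assume "f \<in> \<Phi>"
    hence "norm f = 1" by (simp add: \<Phi>_def)
    moreover have "\<bar>blinfun_apply f e\<bar> \<le> norm f * norm e" using norm_blinfun[of f e] by simp
    ultimately show "- norm e \<le> blinfun_apply f e" by simp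
  qed
  show "e \<in> interior A \<longleftrightarrow> (INF f\<in>sphere 0 1 \<inter> dual_cone A. blinfun_apply f e) > 0"
    unfolding \<Phi>_def[symmetric]
  proof
    assume "e \<in> interior A"
    then obtain \<delta> where d: "\<delta> > 0" "\<And>f. f \<in> \<Phi> \<Longrightarrow> \<delta> \<le> blinfun_apply f e" using cc by blast
    have "\<delta> \<le> (INF f\<in>\<Phi>. blinfun_apply f e)" by (rule cINF_greatest[OF \<Phi>ne d(2)])
    thus "(INF f\<in>\<Phi>. blinfun_apply f e) > 0" using d(1) by simp
  next
    assume p: "(INF f\<in>\<Phi>. blinfun_apply f e) > 0"
    have "\<forall>f\<in>\<Phi>. (INF f\<in>\<Phi>. blinfun_apply f e) \<le> blinfun_apply f e"
      using cINF_lower[OF bdd] by blast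
    thus "e \<in> interior A" using cc p by blast
  qed
next
  fix A :: "'a set"
  assume h: "closed A \<and> convex_cone A"
  have "interior A \<noteq> {} \<longleftrightarrow> 0 \<notin> wstar_closed_convex_hull (sphere 0 1 \<inter> dual_cone A)"
    using cone_char[of A] h wstar_char[of "sphere 0 1 \<inter> dual_cone A"] by auto
  moreover have "A = UNIV \<Longrightarrow> interior A \<noteq> {}" by simp
  ultimately show "interior A \<noteq> {} \<longleftrightarrow>
           A = UNIV \<or> 0 \<notin> wstar_closed_convex_hull (sphere 0 1 \<inter> dual_cone A)" by blast
next
  fix K :: "'a set"
  assume h: "K \<noteq> {} \<and> closed K \<and> convex K"
  have "interior (recession_cone K) \<noteq> {} \<longleftrightarrow> 0 \<notin> wstar_closed_convex_hull (sphere 0 1 \<inter> uminus ` barrier_cone K)"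
  proof -
    have rc: "e \<in> interior (recession_cone K) \<longleftrightarrow>
      (\<exists>\<delta>>0. \<forall>f\<in>sphere 0 1 \<inter> uminus ` barrier_cone K. \<delta> \<le> blinfun_apply f e)" for e
      using rec_char[of K e] h by blast
    have "interior (recession_cone K) \<noteq> {} \<longleftrightarrow>
      (\<exists>e \<delta>. \<delta> > 0 \<and> (\<forall>f\<in>sphere 0 1 \<inter> uminus ` barrier_cone K. \<delta> \<le> blinfun_apply f e))"
    proof
      assume "interior (recession_cone K) \<noteq> {}"
      then obtain e where "e \<in> interior (recession_cone K)" by blast
      thus "\<exists>e \<delta>. \<delta> > 0 \<and> (\<forall>f\<in>sphere 0 1 \<inter> uminus ` barrier_cone K. \<delta> \<le> blinfun_apply f e)"
        using rc by blast
    next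
      assume "\<exists>e \<delta>. \<delta> > 0 \<and> (\<forall>f\<in>sphere 0 1 \<inter> uminus ` barrier_cone K. \<delta> \<le> blinfun_apply f e)"
      then obtain e where "\<exists>\<delta>>0. \<forall>f\<in>sphere 0 1 \<inter> uminus ` barrier_cone K. \<delta> \<le> blinfun_apply f e" by blast
      hence "e \<in> interior (recession_cone K)" using rc by blast
      thus "interior (recession_cone K) \<noteq> {}" by blast
    qed
    thus ?thesis using wstar_char[of "sphere 0 1 \<inter> uminus ` barrier_cone K"] by simp
  qed
  moreover have "K = UNIV \<Longrightarrow> interior (recession_cone K) \<noteq> {}"
  proof -
    assume "K = UNIV"
    hence "recession_cone K = UNIV" by (simp add: recession_cone_def)
    thus "interior (recession_cone K) \<noteq> {}" by simp
  qed
  ultimately show "interior (recession_cone K) \<noteq> {} \<longleftrightarrow>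
           K = UNIV \<or>
           0 \<notin> wstar_closed_convex_hull (sphere 0 1 \<inter> uminus ` barrier_cone K)" by blast
qed

end
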